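(* Let $P=\{S_1,\ldots,S_n\}$ be a homothetic square packing with radii $r_1,\ldots,r_n$ and centres $p_1,\ldots,p_n$, and suppose that for some $1\le s\le n-1$: (i) $\sum_{i=1}^s r_i=\sum_{i=s+1}^n r_i$; (ii) $p_1=(r_1,r_1)$ and $p_{s+1}=(r_{s+1},-r_{s+1})$; (iii) $p_i=\big(r_i+\sum_{j=1}^{i-1}2r_j,\ r_i\big)$ for all $2\le i\le s$, and $p_i=\big(r_i+\sum_{j=s+1}^{i-1}2r_j,\ -r_i\big)$ for all $s+2\le i\le n$. Then the graph $([n],E_y)$ is connected.
   Context: Let $S=\{(x,y): -1\le x,y\le 1\}$. A homothetic packing of $n$ squares is a set $P=\{S_1,\ldots,S_n\}$ with $S_i=r_iS+p_i$, $r_i>0$ (radii), $p_i=(x_i,y_i)\in\mathbb{R}^2$ (centres), such that distinct squares have disjoint interiors. $E_y$ is the set of unordered pairs $\{i,j\}$, $i\ne j$, with $S_i\cap S_j\neq\emptyset$ and $r_i+r_j=|y_i-y_j|\ge|x_i-x_j|$. *)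

theory Defs
  imports "HOL-Analysis.Analysis"
begin

text \<open>The square r S + p, where S = [-1,1]^2, as a subset of the plane real \<times> real.\<close>
definition square :: "real \<Rightarrow> real \<times> real \<Rightarrow> (real \<times> real) set" where
  "square r p = {q. \<bar>fst q - fst p\<bar> \<le> r \<and> \<bar>snd q - snd p\<bar> \<le> r}"

definition homothetic_packing :: "nat \<Rightarrow> (nat \<Rightarrow> real) \<Rightarrow> (nat \<Rightarrow> real \<times> real) \<Rightarrow> bool" where
  "homothetic_packing n r p \<longleftrightarrow>
     (\<forall>i\<in>{1..n}. r i > 0) \<and>
     (\<forall>i\<in>{1..n}. \<forall>j\<in>{1..n}. i \<noteq> j \<longrightarrow>
        interior (square (r i) (p i)) \<inter> interior (square (r j) (p j)) = {})"

definition Ey :: "nat \<Rightarrow> (nat \<Rightarrow> real) \<Rightarrow> (nat \<Rightarrow> real \<times> real) \<Rightarrow> (nat \<times> nat) set" where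
  "Ey n r p = {(i, j). i \<in> {1..n} \<and> j \<in> {1..n} \<and> i \<noteq> j \<and>
      square (r i) (p i) \<inter> square (r j) (p j) \<noteq> {} \<and>
      r i + r j = \<bar>snd (p i) - snd (p j)\<bar> \<and>
      \<bar>snd (p i) - snd (p j)\<bar> \<ge> \<bar>fst (p i) - fst (p j)\<bar>}"

definition graph_connected :: "nat \<Rightarrow> (nat \<times> nat) set \<Rightarrow> bool" where
  "graph_connected n E \<longleftrightarrow> (\<forall>i\<in>{1..n}. \<forall>j\<in>{1..n}. (i, j) \<in> E\<^sup>*)"

end

theory Submission
  imports Defs
begin

lemma cover_aux:
  fixes f :: "nat \<Rightarrow> real"
  assumes "1 \<le> m" "m \<le> M" "0 \<le> x" "x \<le> (\<Sum>j=m..M. f j)"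
  shows "\<exists>i. m \<le> i \<and> i \<le> M \<and> (\<Sum>j=m..i-1. f j) \<le> x \<and> x \<le> (\<Sum>j=m..i. f j)"
  using assms(2,4)
proof (induction M rule: dec_induct)
  case base
  have "{m..m-1} = {}" using assms(1) by auto
  then show ?case using base assms(3) by auto
next
  case (step M)
  show ?case
  proof (cases "x \<le> (\<Sum>j=m..M. f j)")
    case True
    then show ?thesis using step by (meson le_Suc_eq)
  next
    case False
    then show ?thesis using step by (intro exI[of _ "Suc M"]) auto
  qed
qed

lemma sum_split_last:
  fixes f :: "nat \<Rightarrow> real"
  assumes "m \<le> i" "1 \<le> m"
  shows "(\<Sum>j=m..i. f j) = (\<Sum>j=m..i-1. f j) + f i"
proof -
  obtain k where k: "i = Suc k" using assms by (cases i) auto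
  show ?thesis using assms unfolding k by simp
qed

lemma sum_nonneg_mono:
  fixes f :: "nat \<Rightarrow> real"
  assumes "\<And>j. m \<le> j \<Longrightarrow> j \<le> M \<Longrightarrow> 0 \<le> f j" "k \<le> M"
  shows "(\<Sum>j=m..k. f j) \<le> (\<Sum>j=m..M. f j)"
  by (rule sum_mono2) (use assms in auto)

lemma edge_lemma:
  fixes r :: "nat \<Rightarrow> real" and p :: "nat \<Rightarrow> real \<times> real"
  assumes "i \<in> {1..n}" "j \<in> {1..n}" "i \<noteq> j" "0 < r i" "0 < r j"
    and "p i = (r i + a, r i)" "p j = (r j + c, - r j)"
    and "a \<le> x" "x \<le> a + 2 * r i" "c \<le> x" "x \<le> c + 2 * r j"
  shows "(i, j) \<in> Ey n r p" "(j, i) \<in> Ey n r p"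
proof -
  have "(x, 0) \<in> square (r i) (p i) \<inter> square (r j) (p j)"
    using assms unfolding square_def by auto
  then have ne: "square (r i) (p i) \<inter> square (r j) (p j) \<noteq> {}" by blast
  have "r i + r j = \<bar>snd (p i) - snd (p j)\<bar>" using assms by auto
  moreover have "\<bar>snd (p i) - snd (p j)\<bar> \<ge> \<bar>fst (p i) - fst (p j)\<bar>" using assms by auto
  ultimately show "(i, j) \<in> Ey n r p" "(j, i) \<in> Ey n r p"
    using assms ne unfolding Ey_def by (auto simp: Int_commute abs_minus_commute)
qed

theorem lemma21:
  fixes n s :: nat and r :: "nat \<Rightarrow> real" and p :: "nat \<Rightarrow> real \<times> real"
  assumes pack: "homothetic_packing n r p"
    and s: "1 \<le> s" "s \<le> n - 1"
    and i: "(\<Sum>i=1..s. r i) = (\<Sum>i=s+1..n. r i)"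
    and ii: "p 1 = (r 1, r 1)" "p (s+1) = (r (s+1), - r (s+1))"
    and iii1: "\<forall>i. 2 \<le> i \<and> i \<le> s \<longrightarrow> p i = (r i + (\<Sum>j=1..i-1. 2 * r j), r i)"
    and iii2: "\<forall>i. s + 2 \<le> i \<and> i \<le> n \<longrightarrow> p i = (r i + (\<Sum>j=s+1..i-1. 2 * r j), - r i)"
  shows "graph_connected n (Ey n r p)"
proof -
  define E where "E = Ey n r p"
  define a where "a i = (\<Sum>j=1..i-1. 2 * r j)" for i
  define c where "c i = (\<Sum>j=s+1..i-1. 2 * r j)" for i
  define L where "L = (\<Sum>j=1..s. 2 * r j)"
  have rpos: "\<And>i. 1 \<le> i \<Longrightarrow> i \<le> n \<Longrightarrow> 0 < r i" using pack unfolding homothetic_packing_def by auto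
  have sn: "s < n" using s by auto
  have L2: "L = (\<Sum>j=s+1..n. 2 * r j)" unfolding L_def using i by (simp add: sum_distrib_left[symmetric])
  have ptop: "p i = (r i + a i, r i)" if "1 \<le> i" "i \<le> s" for i
  proof (cases "i = 1")
    case True then show ?thesis using ii by (simp add: a_def)
  next
    case False then show ?thesis using iii1 that by (simp add: a_def)
  qed
  have pbot: "p i = (r i + c i, - r i)" if "s+1 \<le> i" "i \<le> n" for i
  proof (cases "i = s+1")
    case True then show ?thesis using ii by (simp add: c_def)
  next
    case False then show ?thesis using iii2 that by (simp add: c_def)
  qed
  have a_nn: "0 \<le> a i" if "i \<le> s" for i unfolding a_def
    by (rule sum_nonneg) (use rpos sn that in \<open>auto intro: less_imp_le\<close>)
  have c_nn: "0 \<le> c i" if "i \<le> n" for i unfolding c_def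
    by (rule sum_nonneg) (use rpos sn that in \<open>auto intro: less_imp_le\<close>)
  have a_up: "a i + 2 * r i = (\<Sum>j=1..i. 2 * r j)" if "1 \<le> i" for i
    unfolding a_def using sum_split_last[of 1 i "\<lambda>j. 2 * r j"] that by simp
  have c_up: "c i + 2 * r i = (\<Sum>j=s+1..i. 2 * r j)" if "s+1 \<le> i" for i
    unfolding c_def using sum_split_last[of "s+1" i "\<lambda>j. 2 * r j"] that by simp
  have a_le: "a i + 2 * r i \<le> L" if "1 \<le> i" "i \<le> s" for i
    unfolding a_up[OF that(1)] L_def
    by (rule sum_nonneg_mono) (use rpos sn that in \<open>auto intro: less_imp_le\<close>)
  have c_le: "c i + 2 * r i \<le> L" if "s+1 \<le> i" "i \<le> n" for i
    unfolding c_up[OF that(1)] L2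
    by (rule sum_nonneg_mono) (use rpos sn that in \<open>auto intro: less_imp_le\<close>)
  have find_top: "\<exists>i. 1 \<le> i \<and> i \<le> s \<and> a i \<le> x \<and> x \<le> a i + 2 * r i" if x0: "0 \<le> x" and xL: "x \<le> L" for x
  proof -
    obtain i where "1 \<le> i" "i \<le> s" "(\<Sum>j=1..i-1. 2 * r j) \<le> x" "x \<le> (\<Sum>j=1..i. 2 * r j)"
      using cover_aux[of 1 s x "\<lambda>j. 2 * r j", OF _ s(1) x0] xL unfolding L_def by auto
    then show ?thesis using a_up unfolding a_def by (intro exI[of _ i]) auto
  qed
  have find_bot: "\<exists>j. s+1 \<le> j \<and> j \<le> n \<and> c j \<le> x \<and> x \<le> c j + 2 * r j" if x0: "0 \<le> x" and xL: "x \<le> L" for x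
  proof -
    obtain j where "s+1 \<le> j" "j \<le> n" "(\<Sum>k=s+1..j-1. 2 * r k) \<le> x" "x \<le> (\<Sum>k=s+1..j. 2 * r k)"
      using cover_aux[of "s+1" n x "\<lambda>j. 2 * r j", OF _ _ x0] xL sn unfolding L2 by auto
    then show ?thesis using c_up unfolding c_def by (intro exI[of _ j]) auto
  qed
  have edge: "(i, j) \<in> E \<and> (j, i) \<in> E"
    if "1 \<le> i" "i \<le> s" "s+1 \<le> j" "j \<le> n" "a i \<le> x" "x \<le> a i + 2 * r i"
       "c j \<le> x" "x \<le> c j + 2 * r j" for i j x
    using edge_lemma[of i n j r p "a i" "c j" x] that ptop pbot rpos sn unfolding E_def by auto
  have top: "(1, i) \<in> E\<^sup>*" if "1 \<le> i" "i \<le> s" for i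
    using that
  proof (induction i rule: dec_induct)
    case base then show ?case by simp
  next
    case (step i)
    define x where "x = a i + 2 * r i"
    have "0 \<le> a i" "0 < r i" using a_nn rpos step sn by auto
    then have x1: "0 \<le> x" "x \<le> L" using a_le step unfolding x_def by auto
    obtain j where j: "s+1 \<le> j" "j \<le> n" "c j \<le> x" "x \<le> c j + 2 * r j"
      using find_bot[OF x1] by blast
    have ax: "a (Suc i) = x" unfolding x_def a_up[OF step(1)] unfolding a_def by simp
    have "(i, j) \<in> E" using edge[of i j x] j step x_def \<open>0 < r i\<close> by auto
    moreover have "0 < r (Suc i)" using rpos step sn by auto
    moreover have "(j, Suc i) \<in> E" using edge[of "Suc i" j x] j step ax \<open>0 < r (Suc i)\<close> by auto
    ultimately show ?case using step by (meson Suc_leD rtrancl_into_rtrancl)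
  qed
  have all: "(1, k) \<in> E\<^sup>*" if "1 \<le> k" "k \<le> n" for k
  proof (cases "k \<le> s")
    case True then show ?thesis using top that by auto
  next
    case False
    have x1: "0 \<le> c k" "c k \<le> L" using c_nn c_le[of k] rpos[of k] that False by auto
    obtain i where i: "1 \<le> i" "i \<le> s" "a i \<le> c k" "c k \<le> a i + 2 * r i"
      using find_top[OF x1] by blast
    have "0 < r k" using rpos that by auto
    then have "(i, k) \<in> E" using edge[of i k "c k"] i that False by auto
    then show ?thesis using top[OF i(1,2)] by (meson rtrancl_into_rtrancl)
  qed
  have symE: "sym E" unfolding E_def Ey_def sym_def
    by (auto simp: Int_commute abs_minus_commute)
  show ?thesis unfolding graph_connected_def E_def[symmetric]
  proof (intro ballI)
    fix k l assume "k \<in> {1..n}" "l \<in> {1..n}"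
    then have "(1, k) \<in> E\<^sup>*" "(1, l) \<in> E\<^sup>*" using all by auto
    moreover have "(k, 1) \<in> E\<^sup>*" using \<open>(1, k) \<in> E\<^sup>*\<close> symE
      by (metis sym_rtrancl symD)
    ultimately show "(k, l) \<in> E\<^sup>*" by (meson rtrancl_trans)
  qed
qed

end
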